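(* Let $(G_n)$ be a sequence of graphs satisfying conditions (1')–(3') below, and let $A$ be the adjacency matrix of $G_n$. Then for all sufficiently large $n$, the matrix $\frac{1}{\delta-9\overline\lambda}A$ is doubly superstochastic.
   Context: $G_n$ has vertex set $V$, $|V|=n$, average degree $d$, minimum degree $\delta$, maximum degree $\Delta$. For $U,W\subseteq V$, $e(U,W)$ is the number of ordered pairs $(u,w)\in U\times W$ with $u$ adjacent to $w$. A number $\overline\lambda=\overline\lambda(n)>0$ is said to control the edge distribution of $G_n$ if for all $U,W\subseteq V$: $\left|e(U,W)-\frac{d}{n}|U||W|\right|\le\overline\lambda\sqrt{|U||W|}$. Conditions: there is such $\overline\lambda$ with (1') $\Delta-\delta\le\overline\lambda$; (2') $\frac{d}{\overline\lambda}/\log^2n\to\infty$; (3') $\log d\cdot\log\frac{d}{\overline\lambda}/\log n\to\infty$. A nonnegative square matrix $M$ is doubly superstochastic if there is a doubly stochastic matrix $B$ (nonnegative, all row and column sums equal to 1) with $B\le M$ entrywise. *)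

theory Defs
  imports Complex_Main
begin

definition simple_graph :: "nat \<Rightarrow> (nat \<Rightarrow> nat \<Rightarrow> bool) \<Rightarrow> bool" where
  "simple_graph n E \<longleftrightarrow> (\<forall>u<n. \<forall>v<n. E u v \<longleftrightarrow> E v u) \<and> (\<forall>v<n. \<not> E v v)"

definition degree :: "nat \<Rightarrow> (nat \<Rightarrow> nat \<Rightarrow> bool) \<Rightarrow> nat \<Rightarrow> nat" where
  "degree n E v = card {u. u < n \<and> E v u}"

definition avg_degree :: "nat \<Rightarrow> (nat \<Rightarrow> nat \<Rightarrow> bool) \<Rightarrow> real" where
  "avg_degree n E = (\<Sum>v<n. real (degree n E v)) / real n"

definition min_degree :: "nat \<Rightarrow> (nat \<Rightarrow> nat \<Rightarrow> bool) \<Rightarrow> real" where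
  "min_degree n E = real (Min ((degree n E) ` {..<n}))"

definition max_degree :: "nat \<Rightarrow> (nat \<Rightarrow> nat \<Rightarrow> bool) \<Rightarrow> real" where
  "max_degree n E = real (Max ((degree n E) ` {..<n}))"

definition edges_between :: "(nat \<Rightarrow> nat \<Rightarrow> bool) \<Rightarrow> nat set \<Rightarrow> nat set \<Rightarrow> nat" where
  "edges_between E U W = card {(u, w). u \<in> U \<and> w \<in> W \<and> E u w}"

definition controls_edge_distribution :: "nat \<Rightarrow> (nat \<Rightarrow> nat \<Rightarrow> bool) \<Rightarrow> real \<Rightarrow> bool" where
  "controls_edge_distribution n E lam \<longleftrightarrow>
     (\<forall>U W. U \<subseteq> {..<n} \<longrightarrow> W \<subseteq> {..<n} \<longrightarrow>
        \<bar>real (edges_between E U W) - avg_degree n E / real n * real (card U) * real (card W)\<bar>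
          \<le> lam * sqrt (real (card U) * real (card W)))"

definition adjacency_matrix :: "(nat \<Rightarrow> nat \<Rightarrow> bool) \<Rightarrow> nat \<Rightarrow> nat \<Rightarrow> real" where
  "adjacency_matrix E i j = (if E i j then 1 else 0)"

text \<open>n x n real matrices are represented as functions nat => nat => real, indices < n.\<close>
definition doubly_stochastic :: "nat \<Rightarrow> (nat \<Rightarrow> nat \<Rightarrow> real) \<Rightarrow> bool" where
  "doubly_stochastic n B \<longleftrightarrow>
     (\<forall>i<n. \<forall>j<n. 0 \<le> B i j) \<and>
     (\<forall>i<n. (\<Sum>j<n. B i j) = 1) \<and> (\<forall>j<n. (\<Sum>i<n. B i j) = 1)"

definition doubly_superstochastic :: "nat \<Rightarrow> (nat \<Rightarrow> nat \<Rightarrow> real) \<Rightarrow> bool" where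
  "doubly_superstochastic n M \<longleftrightarrow>
     (\<forall>i<n. \<forall>j<n. 0 \<le> M i j) \<and>
     (\<exists>B. doubly_stochastic n B \<and> (\<forall>i<n. \<forall>j<n. B i j \<le> M i j))"

end

theory Submission
  imports Defs "HOL-Analysis.Function_Topology"
begin

lemma core:
  fixes s b a k n d dl Dl lam E X DS :: real
  assumes n: "n = a + s" and k: "k = s - b" and a0: "a \<ge> 0" and b0: "b \<ge> 0" and np: "0 < n"
    and lp: "lam > 0" and d20: "d \<ge> 20*lam" and DD: "Dl - dl \<le> lam" and dD: "d \<le> Dl"
    and E: "E = DS - X" and DS: "DS \<ge> dl * s" and X1: "X \<le> Dl * b"
    and X2: "X \<le> d/n* s*b + lam * sqrt(s*b)" and kp: "k > 0"
    and cs: "b \<le> 9*k \<or> (9*k < a \<and> b \<le> a)"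
  shows "(dl - 9*lam) * k \<le> E"
proof (cases "b \<le> 9*k")
  case True
  have "(dl - 9*lam) * k = dl* s - dl*b - 9*lam*k" unfolding k by (simp add: algebra_simps)
  moreover have "(Dl - dl)*b \<le> lam*b" using DD b0 by (simp add: mult_right_mono)
  moreover have "lam*b \<le> lam*(9*k)" using True lp by simp
  ultimately show ?thesis using E DS X1 by (simp add: algebra_simps)
next
  case False
  then have ak: "9*k < a" and ba: "b \<le> a" using cs by auto
  have sb: "b \<le> s" using k kp by simp
  have sq: "sqrt(s*b) \<le> s"
  proof -
    have "sqrt(s*b) \<le> sqrt(s* s)" using sb b0 by (intro real_sqrt_le_mono mult_left_mono) auto
    also have "\<dots> = s" using sb b0 by simp
    finally show ?thesis .
  qed
  have s2b: "s \<le> 2*b" using k False b0 by simp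
  have n3a: "n \<le> 3*a" using n k ak ba kp by simp
  have "d/n* s*b = d*b - d*a*b/n" using n np by (simp add: field_simps)
  moreover have "d*a/n \<ge> d/3"
  proof -
    have "d/3 = d*(a/(3*a))" using ak kp by simp
    also have "\<dots> \<le> d*(a/n)" using n3a np d20 lp ak kp
      by (intro mult_left_mono divide_left_mono) auto
    finally show ?thesis by simp
  qed
  then have "d*a*b/n \<ge> d/3*b" using b0 
    by (metis mult_right_mono times_divide_eq_left mult.commute mult.left_commute)
  moreover have "dl \<ge> d - lam" using DD dD by simp
  then have "dl*b \<ge> (d - lam)*b" using b0 by (simp add: mult_right_mono)
  moreover have "d/3*b \<ge> 3*lam*b" using d20 b0 lp mult_right_mono[of "9*lam" d b] by simp
  moreover have "(dl - 9*lam) * k = dl* s - dl*b - 9*lam*k" unfolding k by (simp add: algebra_simps)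
  moreover have "dl* s \<le> DS" using DS .
  moreover have "lam * sqrt(s*b) \<le> lam* s" using sq lp by simp
  moreover have "lam* s \<le> lam*(2*b)" using s2b lp by simp
  moreover have "lam*k \<ge> 0" using lp kp by simp
  ultimately show ?thesis using E X2 by (simp add: algebra_simps)
qed

inductive rrow and rcol for n :: nat and M :: "nat \<Rightarrow> nat \<Rightarrow> real" and f :: "nat\<times>nat \<Rightarrow> real" where
  base: "i<n \<Longrightarrow> (\<Sum>j<n. f(i,j)) < 1 \<Longrightarrow> rrow n M f i"
| row_step: "rcol n M f j \<Longrightarrow> i<n \<Longrightarrow> f(i,j) > 0 \<Longrightarrow> rrow n M f i"
| col_step: "rrow n M f i \<Longrightarrow> j<n \<Longrightarrow> f(i,j) < M i j \<Longrightarrow> rcol n M f j"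

definition good :: "nat \<Rightarrow> (nat \<Rightarrow> nat \<Rightarrow> real) \<Rightarrow> (nat\<times>nat \<Rightarrow> real) \<Rightarrow> bool" where
  "good n M g \<longleftrightarrow> (\<forall>i j. (i<n \<and> j<n \<longrightarrow> 0 \<le> g(i,j) \<and> g(i,j) \<le> M i j)
        \<and> (\<not>(i<n \<and> j<n) \<longrightarrow> g(i,j) = 0)) \<and> (\<forall>i<n. (\<Sum>j<n. g(i,j)) \<le> 1)"

lemma sum_upd_row:
  fixes g :: "nat\<times>nat \<Rightarrow> real"
  assumes "j0 < n"
  shows "(\<Sum>j<n. g(i,j) + (if (i,j) = (i0,j0) then e else 0)) = (\<Sum>j<n. g(i,j)) + (if i = i0 then e else 0)"
  using assms by (simp add: sum.distrib)

lemma sum_upd_col: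
  fixes g :: "nat\<times>nat \<Rightarrow> real"
  assumes "i0 < n"
  shows "(\<Sum>i<n. g(i,j) + (if (i,j) = (i0,j0) then e else 0)) = (\<Sum>i<n. g(i,j)) + (if j = j0 then e else 0)"
  using assms by (simp add: sum.distrib)

lemma reach_claims:
  fixes n :: nat and M :: "nat \<Rightarrow> nat \<Rightarrow> real" and f :: "nat\<times>nat \<Rightarrow> real"
  assumes gf: "good n M f"
  shows "rrow n M f i \<Longrightarrow> i < n \<and> (\<exists>d0>0. \<exists>C\<ge>0. \<forall>\<eta>. 0<\<eta> \<and> \<eta><d0 \<longrightarrow> (\<exists>g. good n M g \<and>
            (\<forall>p. \<bar>g p - f p\<bar> \<le> C*\<eta>) \<and> (\<forall>j<n. (\<Sum>i<n. g(i,j)) = (\<Sum>i<n. f(i,j))) \<and>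
            (\<Sum>j<n. g(i,j)) \<le> 1 - \<eta>))"
   and "rcol n M f j \<Longrightarrow> j < n \<and> (\<exists>d0>0. \<exists>C\<ge>0. \<forall>\<eta>. 0<\<eta> \<and> \<eta><d0 \<longrightarrow> (\<exists>g. good n M g \<and>
            (\<forall>p. \<bar>g p - f p\<bar> \<le> C*\<eta>) \<and>
            (\<forall>j'<n. (\<Sum>i<n. g(i,j')) = (\<Sum>i<n. f(i,j')) + (if j' = j then \<eta> else 0))))"
proof (induction rule: rrow_rcol.inducts)
  case (base i)
  have "\<exists>g. good n M g \<and> (\<forall>p. \<bar>g p - f p\<bar> \<le> 0 * \<eta>) \<and>
            (\<forall>j<n. (\<Sum>i<n. g (i, j)) = (\<Sum>i<n. f (i, j))) \<and> (\<Sum>j<n. g (i, j)) \<le> 1 - \<eta>"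
    if "0 < \<eta>" "\<eta> < 1 - (\<Sum>j<n. f (i, j))" for \<eta>
    using gf that by (intro exI[of _ f]) auto
  then show ?case using base by (intro conjI exI[of _ "1 - (\<Sum>j<n. f(i,j))"] exI[of _ "0::real"]) auto
next
  case (row_step j i)
  from row_step.IH obtain d0 C where d0: "d0 > 0" "C \<ge> 0" and H: "\<And>\<eta>. 0<\<eta> \<Longrightarrow> \<eta><d0 \<Longrightarrow> (\<exists>g. good n M g \<and>
            (\<forall>p. \<bar>g p - f p\<bar> \<le> C*\<eta>) \<and>
            (\<forall>j'<n. (\<Sum>i<n. g(i,j')) = (\<Sum>i<n. f(i,j')) + (if j' = j then \<eta> else 0)))" and jn: "j < n"
    by blast
  define d1 where "d1 = min d0 (f(i,j) / (C+1))"
  have d1: "d1 > 0" using d0 \<open>f(i,j) > 0\<close> by (auto simp: d1_def)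
  have "\<exists>g. good n M g \<and> (\<forall>p. \<bar>g p - f p\<bar> \<le> (C+1)*\<eta>) \<and>
            (\<forall>j<n. (\<Sum>i<n. g(i,j)) = (\<Sum>i<n. f(i,j))) \<and> (\<Sum>j<n. g(i,j)) \<le> 1 - \<eta>"
    if e: "0 < \<eta>" "\<eta> < d1" for \<eta>
  proof -
    have "\<eta> < d0" using e by (auto simp: d1_def)
    then obtain g where g: "good n M g" "\<forall>p. \<bar>g p - f p\<bar> \<le> C*\<eta>"
      "\<forall>j'<n. (\<Sum>i<n. g(i,j')) = (\<Sum>i<n. f(i,j')) + (if j' = j then \<eta> else 0)"
      using H e by blast
    have "\<eta> < f(i,j) / (C+1)" using e by (auto simp: d1_def)
    then have e2: "(C+1)*\<eta> < f(i,j)" using d0 by (simp add: field_simps)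
    have gij: "g(i,j) \<ge> f(i,j) - C*\<eta>" using g(2)[rule_format, of "(i,j)"] by auto
    define g' where "g' = (\<lambda>p. g p + (if p = (i,j) then -\<eta> else 0))"
    have rows: "(\<Sum>j'<n. g'(i',j')) = (\<Sum>j'<n. g(i',j')) + (if i' = i then -\<eta> else 0)" for i'
      unfolding g'_def using sum_upd_row[OF jn, of g i' i "-\<eta>"] by simp
    have cols: "(\<Sum>i'<n. g'(i',j')) = (\<Sum>i'<n. g(i',j')) + (if j' = j then -\<eta> else 0)" for j'
      unfolding g'_def using sum_upd_col[OF \<open>i<n\<close>, of g j' j "-\<eta>"] by simp
    have "good n M g'"
      using g(1) gij e2 e rows \<open>i<n\<close> jn unfolding good_def g'_def
      by (auto simp: algebra_simps) (smt (verit))+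
    moreover have "\<forall>p. \<bar>g' p - f p\<bar> \<le> (C+1)*\<eta>"
    proof
      fix p
      have h1: "\<bar>g p - f p\<bar> \<le> C*\<eta>" using g(2) by blast
      have "\<bar>g' p - f p\<bar> \<le> \<bar>g p - f p\<bar> + \<eta>" unfolding g'_def using e by auto
      then show "\<bar>g' p - f p\<bar> \<le> (C+1)*\<eta>" using h1 by (simp add: distrib_right)
    qed
    moreover have "\<forall>j<n. (\<Sum>i<n. g'(i,j)) = (\<Sum>i<n. f(i,j))"
      using cols g(3) by auto
    moreover have "(\<Sum>j<n. g'(i,j)) \<le> 1 - \<eta>"
      using rows[of i] g(1) \<open>i<n\<close> unfolding good_def by auto
    ultimately show ?thesis by blast
  qed
  then show ?case using d1 d0 \<open>i<n\<close> by (intro conjI exI[of _ d1] exI[of _ "C+1"]) auto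
next
  case (col_step i j)
  from col_step.IH obtain d0 C where d0: "d0 > 0" "C \<ge> 0" and H: "\<And>\<eta>. 0<\<eta> \<Longrightarrow> \<eta><d0 \<Longrightarrow> (\<exists>g. good n M g \<and>
            (\<forall>p. \<bar>g p - f p\<bar> \<le> C*\<eta>) \<and> (\<forall>j<n. (\<Sum>i<n. g(i,j)) = (\<Sum>i<n. f(i,j))) \<and>
            (\<Sum>j<n. g(i,j)) \<le> 1 - \<eta>)" and iN: "i < n"
    by blast
  note jn = \<open>j<n\<close>
  define d1 where "d1 = min d0 ((M i j - f(i,j)) / (C+1))"
  have d1: "d1 > 0" using d0 \<open>f(i,j) < M i j\<close> by (auto simp: d1_def)
  have "\<exists>g. good n M g \<and> (\<forall>p. \<bar>g p - f p\<bar> \<le> (C+1)*\<eta>) \<and>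
            (\<forall>j'<n. (\<Sum>i<n. g(i,j')) = (\<Sum>i<n. f(i,j')) + (if j' = j then \<eta> else 0))"
    if e: "0 < \<eta>" "\<eta> < d1" for \<eta>
  proof -
    have "\<eta> < d0" using e by (auto simp: d1_def)
    then obtain g where g: "good n M g" "\<forall>p. \<bar>g p - f p\<bar> \<le> C*\<eta>"
      "\<forall>j<n. (\<Sum>i<n. g(i,j)) = (\<Sum>i<n. f(i,j))" "(\<Sum>j<n. g(i,j)) \<le> 1 - \<eta>"
      using H e by blast
    have "\<eta> < (M i j - f(i,j)) / (C+1)" using e by (auto simp: d1_def)
    then have e2: "(C+1)*\<eta> < M i j - f(i,j)" using d0 by (simp add: field_simps)
    have gij: "g(i,j) \<le> f(i,j) + C*\<eta>" using g(2)[rule_format, of "(i,j)"] by auto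
    define g' where "g' = (\<lambda>p. g p + (if p = (i,j) then \<eta> else 0))"
    have rows: "(\<Sum>j'<n. g'(i',j')) = (\<Sum>j'<n. g(i',j')) + (if i' = i then \<eta> else 0)" for i'
      unfolding g'_def using sum_upd_row[OF jn, of g i' i "\<eta>"] by simp
    have cols: "(\<Sum>i'<n. g'(i',j')) = (\<Sum>i'<n. g(i',j')) + (if j' = j then \<eta> else 0)" for j'
      unfolding g'_def using sum_upd_col[OF iN, of g j' j "\<eta>"] by simp
    have "good n M g'"
      using g(1) g(4) gij e2 e rows iN jn unfolding good_def g'_def
      by (auto simp: algebra_simps)
    moreover have "\<forall>p. \<bar>g' p - f p\<bar> \<le> (C+1)*\<eta>"
    proof
      fix p
      have h1: "\<bar>g p - f p\<bar> \<le> C*\<eta>" using g(2) by blast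
      have "\<bar>g' p - f p\<bar> \<le> \<bar>g p - f p\<bar> + \<eta>" unfolding g'_def using e by auto
      then show "\<bar>g' p - f p\<bar> \<le> (C+1)*\<eta>" using h1 by (simp add: distrib_right)
    qed
    moreover have "\<forall>j'<n. (\<Sum>i<n. g'(i,j')) = (\<Sum>i<n. f(i,j')) + (if j' = j then \<eta> else 0)"
      using cols g(3) by auto
    ultimately show ?thesis by blast
  qed
  then show ?case using d1 d0 jn by (intro conjI exI[of _ d1] exI[of _ "C+1"]) auto
qed

lemma exists_max:
  fixes n :: nat and M :: "nat \<Rightarrow> nat \<Rightarrow> real"
  assumes M0: "\<forall>i<n. \<forall>j<n. 0 \<le> M i j"
  defines "F \<equiv> {f::nat\<times>nat\<Rightarrow>real. good n M f \<and> (\<forall>j<n. (\<Sum>i<n. f(i,j)) \<le> 1)}"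
  shows "\<exists>f\<in>F. \<forall>g\<in>F. (\<Sum>i<n. \<Sum>j<n. g(i,j)) \<le> (\<Sum>i<n. \<Sum>j<n. f(i,j))"
proof -
  define K where "K = PiE UNIV (\<lambda>p::nat\<times>nat. if fst p < n \<and> snd p < n then {0..M (fst p) (snd p)} else {0::real})"
  have cK: "compact K"
  proof -
    have "compactin (product_topology (\<lambda>i. euclidean) UNIV) K"
      unfolding K_def by (subst compactin_PiE) auto
    then show ?thesis by (simp add: euclidean_product_topology)
  qed
  have cont: "continuous_on UNIV (\<lambda>f::nat\<times>nat\<Rightarrow>real. f p)" for p
    by simp
  have cR: "closed (\<Inter>i\<in>{..<n}. {f::nat\<times>nat\<Rightarrow>real. (\<Sum>j<n. f(i,j)) \<le> 1})"
    by (intro closed_INT ballI closed_Collect_le continuous_on_sum cont continuous_on_const)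
  have cC: "closed (\<Inter>j\<in>{..<n}. {f::nat\<times>nat\<Rightarrow>real. (\<Sum>i<n. f(i,j)) \<le> 1})"
    by (intro closed_INT ballI closed_Collect_le continuous_on_sum cont continuous_on_const)
  have FK: "F = K \<inter> (\<Inter>i\<in>{..<n}. {f::nat\<times>nat\<Rightarrow>real. (\<Sum>j<n. f(i,j)) \<le> 1}) \<inter> (\<Inter>j\<in>{..<n}. {f::nat\<times>nat\<Rightarrow>real. (\<Sum>i<n. f(i,j)) \<le> 1})"
    unfolding F_def K_def good_def by (auto simp: PiE_iff split: if_splits)
  have cF: "compact F" unfolding FK using cK cR cC by (intro compact_Int_closed closed_Int) auto
  have "(\<lambda>_. 0) \<in> F" unfolding F_def good_def using M0 by auto
  then have ne: "F \<noteq> {}" by auto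
  have ct: "continuous_on F (\<lambda>f::nat\<times>nat\<Rightarrow>real. \<Sum>i<n. \<Sum>j<n. f(i,j))"
    by (intro continuous_on_sum continuous_on_subset[OF cont]) auto
  show ?thesis using continuous_attains_sup[OF cF ne ct] by blast
qed

lemma flow:
  fixes n :: nat and M :: "nat \<Rightarrow> nat \<Rightarrow> real"
  assumes M0: "\<forall>i<n. \<forall>j<n. 0 \<le> M i j"
    and hall: "\<And>S T. S \<subseteq> {..<n} \<Longrightarrow> T \<subseteq> {..<n} \<Longrightarrow>
        real (card S) \<le> real (card T) + (\<Sum>i\<in>S. \<Sum>j\<in>{..<n}-T. M i j)"
  shows "\<exists>B. doubly_stochastic n B \<and> (\<forall>i<n. \<forall>j<n. B i j \<le> M i j)"
proof -
  define F where "F = {f::nat\<times>nat\<Rightarrow>real. good n M f \<and> (\<forall>j<n. (\<Sum>i<n. f(i,j)) \<le> 1)}"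
  obtain f where fF: "f \<in> F" and fmax: "\<And>g. g \<in> F \<Longrightarrow> (\<Sum>i<n. \<Sum>j<n. g(i,j)) \<le> (\<Sum>i<n. \<Sum>j<n. f(i,j))"
    using exists_max[OF M0] unfolding F_def by blast
  have gf: "good n M f" and csle: "\<And>j. j<n \<Longrightarrow> (\<Sum>i<n. f(i,j)) \<le> 1" using fF by (auto simp: F_def)
  have f0: "\<And>i j. i<n \<Longrightarrow> j<n \<Longrightarrow> 0 \<le> f(i,j)" and fM: "\<And>i j. i<n \<Longrightarrow> j<n \<Longrightarrow> f(i,j) \<le> M i j"
    and rsle: "\<And>i. i<n \<Longrightarrow> (\<Sum>j<n. f(i,j)) \<le> 1"
    using gf by (auto simp: good_def)
  have tot: "(\<Sum>i<n. \<Sum>j<n. g(i,j)) = (\<Sum>j<n. \<Sum>i<n. g(i,j))" for g :: "nat\<times>nat\<Rightarrow>real"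
    by (rule sum.swap)
  have claim1: "(\<Sum>i<n. f(i,j)) = 1" if rj: "rcol n M f j" for j
  proof (rule ccontr)
    assume ne: "(\<Sum>i<n. f(i,j)) \<noteq> 1"
    from reach_claims(2)[OF gf rj] obtain d0 C where jn: "j < n" and d0: "d0 > 0" and
      H: "\<And>\<eta>. 0<\<eta> \<Longrightarrow> \<eta><d0 \<Longrightarrow> (\<exists>g. good n M g \<and>
            (\<forall>p. \<bar>g p - f p\<bar> \<le> C*\<eta>) \<and>
            (\<forall>j'<n. (\<Sum>i<n. g(i,j')) = (\<Sum>i<n. f(i,j')) + (if j' = j then \<eta> else 0)))"
      by blast
    have lt: "(\<Sum>i<n. f(i,j)) < 1" using ne csle[OF jn] by auto
    define \<eta> where "\<eta> = min d0 (1 - (\<Sum>i<n. f(i,j))) / 2"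
    have e: "0 < \<eta>" "\<eta> < d0" "\<eta> < 1 - (\<Sum>i<n. f(i,j))" using d0 lt by (auto simp: \<eta>_def)
    obtain g where g: "good n M g" and gc: "\<forall>j'<n. (\<Sum>i<n. g(i,j')) = (\<Sum>i<n. f(i,j')) + (if j' = j then \<eta> else 0)"
      using H[OF e(1,2)] by blast
    have "g \<in> F" unfolding F_def using g gc csle e(3) by auto
    then have le: "(\<Sum>i<n. \<Sum>j<n. g(i,j)) \<le> (\<Sum>i<n. \<Sum>j<n. f(i,j))" by (rule fmax)
    have "(\<Sum>j'<n. \<Sum>i<n. g(i,j')) = (\<Sum>j'<n. (\<Sum>i<n. f(i,j')) + (if j' = j then \<eta> else 0))"
      using gc by (intro sum.cong) auto
    also have "\<dots> = (\<Sum>j'<n. \<Sum>i<n. f(i,j')) + \<eta>" using jn by (simp add: sum.distrib)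
    finally show False using le e(1) tot[of g] tot[of f] by linarith
  qed
  have claim2: "(\<Sum>j<n. f(i,j)) = 1" if "i < n" for i
  proof (rule ccontr)
    assume ne: "(\<Sum>j<n. f(i,j)) \<noteq> 1"
    have lt: "(\<Sum>j<n. f(i,j)) < 1" using ne rsle[OF that] by auto
    define S where "S = {i. i<n \<and> rrow n M f i}"
    define T where "T = {j. j<n \<and> rcol n M f j}"
    have S: "S \<subseteq> {..<n}" "finite S" and T: "T \<subseteq> {..<n}" "finite T"
      by (auto simp: S_def T_def intro: finite_subset)
    have iS: "i \<in> S" using that lt by (auto simp: S_def intro: base)
    have fullM: "f(i',j) = M i' j" if "i' \<in> S" "j < n" "j \<notin> T" for i' j
    proof (rule ccontr)
      assume "f(i',j) \<noteq> M i' j"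
      then have "f(i',j) < M i' j" using fM[of i' j] that S by auto
      then have "rcol n M f j" using that by (auto simp: S_def intro: col_step)
      then show False using that by (auto simp: T_def)
    qed
    have zero: "f(i',j) = 0" if "i' < n" "i' \<notin> S" "j \<in> T" for i' j
    proof (rule ccontr)
      assume "f(i',j) \<noteq> 0"
      then have "f(i',j) > 0" using f0[of i' j] that T by auto
      then have "rrow n M f i'" using that by (auto simp: T_def intro: row_step)
      then show False using that by (auto simp: S_def)
    qed
    have "(\<Sum>i'\<in>S. \<Sum>j<n. f(i',j)) < (\<Sum>i'\<in>S. 1)"
      using S iS lt rsle by (intro sum_strict_mono_ex1) auto
    then have A: "(\<Sum>i'\<in>S. \<Sum>j<n. f(i',j)) < real (card S)" by simp
    have split1: "(\<Sum>j<n. f(i',j)) = (\<Sum>j\<in>T. f(i',j)) + (\<Sum>j\<in>{..<n}-T. M i' j)" if "i' \<in> S" for i'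
    proof -
      have "(\<Sum>j<n. f(i',j)) = (\<Sum>j\<in>{..<n}-T. f(i',j)) + (\<Sum>j\<in>T. f(i',j))"
        using T by (intro sum.subset_diff) auto
      also have "(\<Sum>j\<in>{..<n}-T. f(i',j)) = (\<Sum>j\<in>{..<n}-T. M i' j)"
        using fullM that by (intro sum.cong) auto
      finally show ?thesis by simp
    qed
    have colT: "(\<Sum>i'\<in>S. f(i',j)) = 1" if "j \<in> T" for j
    proof -
      have "(\<Sum>i'<n. f(i',j)) = (\<Sum>i'\<in>{..<n}-S. f(i',j)) + (\<Sum>i'\<in>S. f(i',j))"
        using S by (intro sum.subset_diff) auto
      also have "(\<Sum>i'\<in>{..<n}-S. f(i',j)) = 0"
        using zero that by (intro sum.neutral) auto
      finally show ?thesis using claim1 that by (auto simp: T_def)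
    qed
    have "(\<Sum>i'\<in>S. \<Sum>j<n. f(i',j)) = (\<Sum>i'\<in>S. \<Sum>j\<in>T. f(i',j)) + (\<Sum>i'\<in>S. \<Sum>j\<in>{..<n}-T. M i' j)"
      using split1 by (simp add: sum.distrib)
    also have "(\<Sum>i'\<in>S. \<Sum>j\<in>T. f(i',j)) = (\<Sum>j\<in>T. \<Sum>i'\<in>S. f(i',j))" by (rule sum.swap)
    also have "\<dots> = real (card T)" using colT by simp
    finally show False using A hall[OF S(1) T(1)] by linarith
  qed
  have claim3: "(\<Sum>i<n. f(i,j)) = 1" if jn: "j < n" for j
  proof (rule ccontr)
    assume ne: "(\<Sum>i<n. f(i,j)) \<noteq> 1"
    have "(\<Sum>j'<n. \<Sum>i<n. f(i,j')) < (\<Sum>j'<n. 1)"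
      using jn ne csle by (intro sum_strict_mono_ex1) (auto intro!: bexI[of _ j] simp: order_le_less)
    moreover have "(\<Sum>i<n. \<Sum>j<n. f(i,j)) = (\<Sum>i<n. 1)" using claim2 by simp
    ultimately show False using tot[of f] by simp
  qed
  show ?thesis
    using f0 fM claim2 claim3 unfolding doubly_stochastic_def
    by (intro exI[of _ "\<lambda>i j. f(i,j)"]) auto
qed


lemma card_filter_sum:
  assumes "finite W"
  shows "real (card {w\<in>W. E u w}) = (\<Sum>w\<in>W. adjacency_matrix E u w)"
proof -
  have "real (card {w\<in>W. E u w}) = (\<Sum>w\<in>{w\<in>W. E u w}. 1)" by simp
  also have "\<dots> = (\<Sum>w\<in>W. if E u w then 1 else 0)" using assms by (rule sum.inter_filter)
  finally show ?thesis by (simp add: adjacency_matrix_def)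
qed

lemma eb_sum:
  assumes "finite U" "finite W"
  shows "real (edges_between E U W) = (\<Sum>u\<in>U. \<Sum>w\<in>W. adjacency_matrix E u w)"
proof -
  have "{(u, w). u \<in> U \<and> w \<in> W \<and> E u w} = Sigma U (\<lambda>u. {w\<in>W. E u w})" by auto
  then have "edges_between E U W = (\<Sum>u\<in>U. card {w\<in>W. E u w})"
    unfolding edges_between_def using assms by (simp add: card_SigmaI)
  then show ?thesis using card_filter_sum[OF assms(2)] by simp
qed

lemma deg_sum: "real (degree n E u) = (\<Sum>w<n. adjacency_matrix E u w)"
  unfolding degree_def using card_filter_sum[of "{..<n}" E u] by (simp add: lessThan_def)

lemma card_compl_real:
  assumes "X \<subseteq> {..<n}"
  shows "real (card ({..<n} - X)) = real n - real (card X)"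
proof -
  have f: "finite X" using assms finite_subset by blast
  have "card X \<le> n" using card_mono[OF _ assms] by simp
  moreover have "card ({..<n} - X) = n - card X" using card_Diff_subset[OF f assms] by simp
  ultimately show ?thesis by (simp add: of_nat_diff)
qed

lemma half:
  fixes n :: nat and E and lam :: real and S W :: "nat set"
  defines "es \<equiv> \<lambda>X Y. (\<Sum>x\<in>X. \<Sum>y\<in>Y. adjacency_matrix E x y)"
  assumes sg: "simple_graph n E" and n1: "n \<ge> 1" and lp: "lam > 0"
    and ctrl: "controls_edge_distribution n E lam"
    and cnd: "max_degree n E - min_degree n E \<le> lam"
    and d20: "avg_degree n E \<ge> 20*lam"
    and S: "S \<subseteq> {..<n}" and W: "W \<subseteq> {..<n}"
    and kp: "card S + card W > n"
    and cs: "real (card ({..<n}-W)) \<le> 9*(real (card S) + real (card W) - n) \<or>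
         (9*(real (card S) + real (card W) - n) < real n - real (card S) \<and> real (card ({..<n}-W)) \<le> real n - real (card S))"
  shows "(min_degree n E - 9*lam) * (real (card S) + real (card W) - n) \<le> es S W"
proof -
  define dl where "dl = min_degree n E"
  define Dl where "Dl = max_degree n E"
  define d where "d = avg_degree n E"
  define T where "T = {..<n} - W"
  have fin: "finite X" if "X \<subseteq> {..<n}" for X using that finite_subset by blast
  have ne: "degree n E ` {..<n} \<noteq> {}" using n1 by (auto simp: lessThan_empty_iff)
  have degb: "dl \<le> degree n E v" "degree n E v \<le> Dl" if "v < n" for v
    using that ne by (auto simp: dl_def Dl_def min_degree_def max_degree_def)
  have es_full: "es X {..<n} = (\<Sum>x\<in>X. real (degree n E x))" for X
    unfolding es_def by (simp add: deg_sum)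
  have es_lo: "dl * card X \<le> es X {..<n}" "es X {..<n} \<le> Dl * card X" if "X \<subseteq> {..<n}" for X
  proof -
    have "(\<Sum>x\<in>X. dl) \<le> (\<Sum>x\<in>X. real (degree n E x))" using that degb by (intro sum_mono) auto
    then show "dl * card X \<le> es X {..<n}" using es_full by (simp add: mult.commute)
    have "(\<Sum>x\<in>X. real (degree n E x)) \<le> (\<Sum>x\<in>X. Dl)" using that degb by (intro sum_mono) auto
    then show "es X {..<n} \<le> Dl * card X" using es_full by (simp add: mult.commute)
  qed
  have es0: "0 \<le> es X Y" for X Y unfolding es_def by (intro sum_nonneg) (auto simp: adjacency_matrix_def)
  have es_split: "es X {..<n} = es X Y + es X ({..<n} - Y)" if "Y \<subseteq> {..<n}" for X Y
  proof -
    have "es X {..<n} = (\<Sum>x\<in>X. (\<Sum>y\<in>{..<n}-Y. adjacency_matrix E x y) + (\<Sum>y\<in>Y. adjacency_matrix E x y))"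
      unfolding es_def using that by (intro sum.cong refl sum.subset_diff) auto
    then show ?thesis unfolding es_def by (simp add: sum.distrib)
  qed
  have es_sym: "es X Y = es Y X" if "X \<subseteq> {..<n}" "Y \<subseteq> {..<n}" for X Y
  proof -
    have "es X Y = (\<Sum>x\<in>X. \<Sum>y\<in>Y. adjacency_matrix E y x)"
      unfolding es_def using that sg by (intro sum.cong refl) (auto simp: adjacency_matrix_def simple_graph_def subset_iff)
    also have "\<dots> = es Y X" unfolding es_def by (rule sum.swap)
    finally show ?thesis .
  qed
  have es_ctrl: "es X Y \<le> d / real n * real (card X) * real (card Y) + lam * sqrt (real (card X) * real (card Y))"
    if "X \<subseteq> {..<n}" "Y \<subseteq> {..<n}" for X Y
  proof -
    have "\<bar>real (edges_between E X Y) - d / real n * real (card X) * real (card Y)\<bar>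
          \<le> lam * sqrt (real (card X) * real (card Y))"
      using ctrl that unfolding controls_edge_distribution_def d_def by blast
    moreover have "real (edges_between E X Y) = es X Y" unfolding es_def using fin that by (simp add: eb_sum)
    ultimately show ?thesis by linarith
  qed
  have dD: "d \<le> Dl"
  proof -
    have "(\<Sum>v<n. real (degree n E v)) \<le> (\<Sum>v<n. Dl)" using degb by (intro sum_mono) auto
    then have "(\<Sum>v<n. real (degree n E v)) \<le> n * Dl" by simp
    then show ?thesis using n1 unfolding d_def avg_degree_def by (simp add: divide_le_eq mult.commute)
  qed
  have TW: "{..<n} - T = W" using W by (auto simp: T_def)
  have Tsub: "T \<subseteq> {..<n}" by (auto simp: T_def)
  have cT: "real (card T) = n - real (card W)" using card_compl_real[OF W] unfolding T_def .
  have cSc: "real (card ({..<n}-S)) = n - real (card S)" using card_compl_real[OF S] .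
  have Esplit: "es S W = es S {..<n} - es S T"
    using es_split[OF Tsub, of S] TW by simp
  have X1: "es S T \<le> Dl * card T"
  proof -
    have "es S T = es T S" using es_sym S Tsub by blast
    also have "\<dots> \<le> es T {..<n}" using es_split[OF S, of T] es0[of T "{..<n}-S"] by simp
    also have "\<dots> \<le> Dl * card T" using es_lo(2)[OF Tsub] .
    finally show ?thesis .
  qed
  have cSn: "card S \<le> n" using card_mono[OF _ S] by simp
  show ?thesis
    using cSn core[of n "real n - real (card S)" "real (card S)" "real (card S) + real (card W) - n" "real (card T)"
        lam d Dl dl "es S W" "es S {..<n}" "es S T"]
    using n1 lp d20 cnd dD Esplit es_lo(1)[OF S] X1 es_ctrl[OF S Tsub] kp cs cT
    by (simp add: dl_def Dl_def d_def T_def cSc)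
qed


lemma avg_le_max:
  assumes n1: "n \<ge> 1"
  shows "avg_degree n E \<le> max_degree n E"
proof -
  have ne: "degree n E ` {..<n} \<noteq> {}" using n1 by (auto simp: lessThan_empty_iff)
  have "(\<Sum>v<n. real (degree n E v)) \<le> (\<Sum>v<n. max_degree n E)"
    using ne by (intro sum_mono) (auto simp: max_degree_def)
  then have "(\<Sum>v<n. real (degree n E v)) \<le> n * max_degree n E" by simp
  then show ?thesis using n1 unfolding avg_degree_def by (simp add: divide_le_eq mult.commute)
qed

lemma es_sym:
  assumes sg: "simple_graph n E" and "X \<subseteq> {..<n}" "Y \<subseteq> {..<n}"
  shows "(\<Sum>x\<in>X. \<Sum>y\<in>Y. adjacency_matrix E x y) = (\<Sum>y\<in>Y. \<Sum>x\<in>X. adjacency_matrix E y x)"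
proof -
  have "(\<Sum>x\<in>X. \<Sum>y\<in>Y. adjacency_matrix E x y) = (\<Sum>x\<in>X. \<Sum>y\<in>Y. adjacency_matrix E y x)"
    using assms by (intro sum.cong refl) (auto simp: adjacency_matrix_def simple_graph_def subset_iff)
  also have "\<dots> = (\<Sum>y\<in>Y. \<Sum>x\<in>X. adjacency_matrix E y x)" by (rule sum.swap)
  finally show ?thesis .
qed

lemma hall_graph:
  fixes n :: nat and E and lam :: real and S T :: "nat set"
  assumes sg: "simple_graph n E" and n1: "n \<ge> 1" and lp: "lam > 0"
    and ctrl: "controls_edge_distribution n E lam"
    and cnd: "max_degree n E - min_degree n E \<le> lam"
    and d20: "avg_degree n E \<ge> 20*lam"
    and S: "S \<subseteq> {..<n}" and T: "T \<subseteq> {..<n}"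
  shows "real (card S) \<le> real (card T) + (\<Sum>i\<in>S. \<Sum>j\<in>{..<n}-T. adjacency_matrix E i j / (min_degree n E - 9*lam))"
proof -
  define c where "c = min_degree n E - 9*lam"
  have cp: "c > 0" using avg_le_max[OF n1, of E] cnd d20 lp by (simp add: c_def)
  define W where "W = {..<n} - T"
  have W: "W \<subseteq> {..<n}" by (auto simp: W_def)
  define es where "es = (\<Sum>i\<in>S. \<Sum>j\<in>W. adjacency_matrix E i j)"
  have es0: "es \<ge> 0" unfolding es_def by (intro sum_nonneg) (auto simp: adjacency_matrix_def)
  have sumdiv: "(\<Sum>i\<in>S. \<Sum>j\<in>{..<n}-T. adjacency_matrix E i j / c) = es / c"
    unfolding es_def W_def by (simp add: sum_divide_distrib)
  have cW: "real (card W) = n - real (card T)" using card_compl_real[OF T] by (simp add: W_def)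
  have cWc: "{..<n} - W = T" using T by (auto simp: W_def)
  have cS: "real (card ({..<n} - S)) = n - real (card S)" using card_compl_real[OF S] .
  have cT: "real (card ({..<n} - W)) = n - real (card W)" using card_compl_real[OF W] .
  have key: "c * (real (card S) + real (card W) - n) \<le> es"
  proof (cases "card S + card W > n")
    case False
    then have "real (card S) + real (card W) - n \<le> 0" by linarith
    then have "c * (real (card S) + real (card W) - n) \<le> 0" using cp by (simp add: mult_nonneg_nonpos)
    then show ?thesis using es0 by linarith
  next
    case True
    define k where "k = real (card S) + real (card W) - n"
    have "real (card ({..<n}-W)) \<le> 9*k \<or> (9*k < real n - real (card S) \<and> real (card ({..<n}-W)) \<le> real n - real (card S))
        \<or> real (card ({..<n}-S)) \<le> 9*k \<or> (9*k < real n - real (card W) \<and> real (card ({..<n}-S)) \<le> real n - real (card W))"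
      using cS cT by (simp add: k_def) linarith
    then show ?thesis
    proof (elim disjE)
      assume h: "real (card ({..<n}-W)) \<le> 9*k"
      show ?thesis using half[OF sg n1 lp ctrl cnd d20 S W True] h by (simp add: k_def c_def es_def)
    next
      assume h: "9*k < real n - real (card S) \<and> real (card ({..<n}-W)) \<le> real n - real (card S)"
      show ?thesis using half[OF sg n1 lp ctrl cnd d20 S W True] h by (simp add: k_def c_def es_def)
    next
      assume h: "real (card ({..<n}-S)) \<le> 9*k"
      have "c * (real (card W) + real (card S) - n) \<le> (\<Sum>x\<in>W. \<Sum>y\<in>S. adjacency_matrix E x y)"
        using half[OF sg n1 lp ctrl cnd d20 W S] True h by (simp add: k_def c_def add.commute)
      then show ?thesis using es_sym[OF sg S W] by (simp add: es_def add.commute)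
    next
      assume h: "9*k < real n - real (card W) \<and> real (card ({..<n}-S)) \<le> real n - real (card W)"
      have "c * (real (card W) + real (card S) - n) \<le> (\<Sum>x\<in>W. \<Sum>y\<in>S. adjacency_matrix E x y)"
        using half[OF sg n1 lp ctrl cnd d20 W S] True h by (simp add: k_def c_def add.commute)
      then show ?thesis using es_sym[OF sg S W] by (simp add: es_def add.commute)
    qed
  qed
  have "real (card S) + real (card W) - n \<le> es / c" using key cp by (simp add: field_simps mult.commute)
  then show ?thesis using sumdiv cW by (simp add: c_def)
qed



theorem corollary1:
  fixes G :: "nat \<Rightarrow> nat \<Rightarrow> nat \<Rightarrow> bool"
    and lam :: "nat \<Rightarrow> real"
  assumes simple: "\<And>n. simple_graph n (G n)"
    and lam_pos: "\<And>n. lam n > 0"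
    and control: "\<And>n. n \<ge> 1 \<Longrightarrow> controls_edge_distribution n (G n) (lam n)"
    and cond1: "\<And>n. n \<ge> 1 \<Longrightarrow> max_degree n (G n) - min_degree n (G n) \<le> lam n"
    and cond2: "filterlim (\<lambda>n. (avg_degree n (G n) / lam n) / (ln (real n))\<^sup>2) at_top sequentially"
    and cond3: "filterlim (\<lambda>n. ln (avg_degree n (G n)) * ln (avg_degree n (G n) / lam n) / ln (real n))
                  at_top sequentially"
  shows "\<forall>\<^sub>F n in sequentially.
           doubly_superstochastic n
             (\<lambda>i j. adjacency_matrix (G n) i j / (min_degree n (G n) - 9 * lam n))"
proof -
  have e1: "\<forall>\<^sub>F n in sequentially. n \<ge> 3" by (rule eventually_ge_at_top)
  have e2: "\<forall>\<^sub>F n in sequentially. 20 \<le> (avg_degree n (G n) / lam n) / (ln (real n))\<^sup>2"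
    using cond2 by (simp add: filterlim_at_top)
  show ?thesis
    using eventually_conj[OF e1 e2]
  proof (rule eventually_mono)
    fix n assume h: "3 \<le> n \<and> 20 \<le> (avg_degree n (G n) / lam n) / (ln (real n))\<^sup>2"
    have n1: "n \<ge> 1" using h by simp
    have "ln (exp 1) \<le> ln (real n)" using h exp_le by (subst ln_le_cancel_iff) auto
    then have ln1: "1 \<le> ln (real n)" by simp
    then have ln2: "1 \<le> (ln (real n))\<^sup>2" by (simp add: one_le_power)
    have Lp: "(ln (real n))\<^sup>2 > 0" using ln2 by linarith
    have "20 * (ln (real n))\<^sup>2 \<le> avg_degree n (G n) / lam n"
      using h pos_le_divide_eq[OF Lp, of 20 "avg_degree n (G n) / lam n"] by (simp add: mult.commute)
    then have "20 \<le> avg_degree n (G n) / lam n" using ln2 by linarith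
    then have d20: "20 * lam n \<le> avg_degree n (G n)" using lam_pos[of n] by (simp add: le_divide_eq)
    define c where "c = min_degree n (G n) - 9 * lam n"
    have cp: "c > 0" using avg_le_max[OF n1, of "G n"] cond1[OF n1] d20 lam_pos[of n] by (simp add: c_def)
    have M0: "\<forall>i<n. \<forall>j<n. 0 \<le> adjacency_matrix (G n) i j / c"
      using cp by (auto simp: adjacency_matrix_def)
    have hall: "real (card S) \<le> real (card T) + (\<Sum>i\<in>S. \<Sum>j\<in>{..<n}-T. adjacency_matrix (G n) i j / c)"
      if "S \<subseteq> {..<n}" "T \<subseteq> {..<n}" for S T
      using hall_graph[OF simple n1 lam_pos control[OF n1] cond1[OF n1] d20 that] by (simp add: c_def)
    show "doubly_superstochastic n (\<lambda>i j. adjacency_matrix (G n) i j / (min_degree n (G n) - 9 * lam n))"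
      using flow[OF M0 hall] M0 unfolding doubly_superstochastic_def c_def by blast
  qed
qed

end
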